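(* Let $(M,g)$ be a four-dimensional spacetime with signature $(+,-,-,-)$, let $X_{abcd}$ be an arbitrary $(2,2)$ double form at a point ($X_{abcd}=-X_{bacd}=-X_{abdc}$), and let $t^q$ be a vector at that point with $t_mt^m\neq0$. Define the left, right and double duals $\overleftarrow{\star}X_{abcd}=\tfrac12\varepsilon_{ab}{}^{pq}X_{pqcd}$, $\overrightarrow{\star}X_{abcd}=\tfrac12\varepsilon_{cd}{}^{pq}X_{abpq}$, $\overleftrightarrow{\star}X_{abcd}=\tfrac14\varepsilon_{ab}{}^{pq}\varepsilon_{cd}{}^{rs}X_{pqrs}$, and the tensors $$\mathfrak A_{ac}=X_{abcd}t^bt^d,\quad \mathfrak B_{ac}=-\overrightarrow{\star}X_{abcd}t^bt^d,\quad \mathfrak C_{ac}=-\overleftarrow{\star}X_{abcd}t^bt^d,\quad \mathfrak D_{ac}=\overleftrightarrow{\star}X_{abcd}t^bt^d.$$ Then $$X_{abcd}=\frac{\big\{g_{abpq}\big(g_{cdrs}\mathfrak A^{pr}+\varepsilon_{cdrs}\mathfrak B^{pr}\big)+\varepsilon_{abpq}\big(g_{cdrs}\mathfrak C^{pr}+\varepsilon_{cdrs}\mathfrak D^{pr}\big)\big\}t^qt^s}{(t_mt^m)^2},$$ where $g_{abcd}=g_{ac}g_{bd}-g_{ad}g_{bc}$.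
   Context: The Levi-Civita tensors are $\varepsilon_{abcd}=\sqrt{-\det g}\,[abcd]$, $\varepsilon^{abcd}=-[abcd]/\sqrt{-\det g}$ with $[0123]=+1$, so that $\varepsilon^{a_1\dots a_4}\varepsilon_{b_1\dots b_4}=-\delta^{a_1\dots a_4}_{b_1\dots b_4}$ (generalized Kronecker delta). Indices are raised and lowered with $g$. *)

theory Defs
  imports Complex_Main
begin

text \<open>Tensors at a point of a 4-dimensional spacetime, in components with respect to
  a coordinate basis; indices are natural numbers in 0..3 (i.e. below 4).\<close>

definition eta :: "nat \<Rightarrow> nat \<Rightarrow> real" where
  "eta i j = (if i = j then (if i = 0 then 1 else -1) else 0)"

definition lorentzian :: "(nat \<Rightarrow> nat \<Rightarrow> real) \<Rightarrow> bool" where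
  "lorentzian g \<longleftrightarrow> (\<forall>a<4. \<forall>b<4. g a b = g b a) \<and>
     (\<exists>E :: nat \<Rightarrow> nat \<Rightarrow> real. \<forall>i<4. \<forall>j<4.
        (\<Sum>a<4. \<Sum>b<4. E i a * E j b * g a b) = eta i j)"

text \<open>Levi-Civita symbol [abcd] with [0123] = 1.\<close>
definition lc_sym :: "nat \<Rightarrow> nat \<Rightarrow> nat \<Rightarrow> nat \<Rightarrow> real" where
  "lc_sym a b c d = real_of_int (sgn ((int b - int a) * (int c - int a) * (int d - int a)
      * (int c - int b) * (int d - int b) * (int d - int c)))"

definition mdet :: "(nat \<Rightarrow> nat \<Rightarrow> real) \<Rightarrow> real" where
  "mdet g = (\<Sum>a<4. \<Sum>b<4. \<Sum>c<4. \<Sum>d<4.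
      lc_sym a b c d * g 0 a * g 1 b * g 2 c * g 3 d)"

definition ginv :: "(nat \<Rightarrow> nat \<Rightarrow> real) \<Rightarrow> nat \<Rightarrow> nat \<Rightarrow> real" where
  "ginv g = (THE h. (\<forall>a<4. \<forall>c<4. (\<Sum>b<4. g a b * h b c) = (if a = c then 1 else 0))
                 \<and> (\<forall>a b. \<not> (a < 4 \<and> b < 4) \<longrightarrow> h a b = 0))"

definition eps_low :: "(nat \<Rightarrow> nat \<Rightarrow> real) \<Rightarrow> nat \<Rightarrow> nat \<Rightarrow> nat \<Rightarrow> nat \<Rightarrow> real" where
  "eps_low g a b c d = sqrt (- mdet g) * lc_sym a b c d"

definition eps_mix :: "(nat \<Rightarrow> nat \<Rightarrow> real) \<Rightarrow> nat \<Rightarrow> nat \<Rightarrow> nat \<Rightarrow> nat \<Rightarrow> real" where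
  "eps_mix g a b p q = (\<Sum>r<4. \<Sum>s<4. eps_low g a b r s * ginv g r p * ginv g s q)"

definition g4 :: "(nat \<Rightarrow> nat \<Rightarrow> real) \<Rightarrow> nat \<Rightarrow> nat \<Rightarrow> nat \<Rightarrow> nat \<Rightarrow> real" where
  "g4 g a b c d = g a c * g b d - g a d * g b c"

definition left_dual where
  "left_dual g X a b c d = (1/2) * (\<Sum>p<4. \<Sum>q<4. eps_mix g a b p q * X p q c d)"
definition right_dual where
  "right_dual g X a b c d = (1/2) * (\<Sum>p<4. \<Sum>q<4. eps_mix g c d p q * X a b p q)"
definition double_dual where
  "double_dual g X a b c d = (1/4) * (\<Sum>p<4. \<Sum>q<4. \<Sum>r<4. \<Sum>s<4.
      eps_mix g a b p q * eps_mix g c d r s * X p q r s)"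

definition contr :: "(nat \<Rightarrow> nat \<Rightarrow> nat \<Rightarrow> nat \<Rightarrow> real) \<Rightarrow> (nat \<Rightarrow> real) \<Rightarrow> nat \<Rightarrow> nat \<Rightarrow> real" where
  "contr Y t a c = (\<Sum>b<4. \<Sum>d<4. Y a b c d * t b * t d)"

definition frakA where "frakA g X t a c = contr X t a c"
definition frakB where "frakB g X t a c = - contr (right_dual g X) t a c"
definition frakC where "frakC g X t a c = - contr (left_dual g X) t a c"
definition frakD where "frakD g X t a c = contr (double_dual g X) t a c"

definition raise2 :: "(nat \<Rightarrow> nat \<Rightarrow> real) \<Rightarrow> (nat \<Rightarrow> nat \<Rightarrow> real) \<Rightarrow> nat \<Rightarrow> nat \<Rightarrow> real" where
  "raise2 g T p r = (\<Sum>a<4. \<Sum>c<4. ginv g p a * ginv g r c * T a c)"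

definition sqnorm :: "(nat \<Rightarrow> nat \<Rightarrow> real) \<Rightarrow> (nat \<Rightarrow> real) \<Rightarrow> real" where
  "sqnorm g t = (\<Sum>m<4. \<Sum>n<4. g m n * t m * t n)"

end

theory Submission
  imports Defs "HOL-Analysis.Analysis"
begin
lemma dsumR: "(\<Sum>d\<in>A. f d * (if d = c then 1 else 0)) = (if c \<in> A then f c else (0::'a::semiring_1))"
  if "finite A" using that by (simp add: if_distrib[of "\<lambda>x. f _ * x"] sum.delta cong: if_cong)
lemma dsumL: "(\<Sum>d\<in>A. (if d = c then 1 else 0) * f d) = (if c \<in> A then f c else (0::'a::semiring_1))"
  if "finite A" using that by (simp add: if_distrib[of "\<lambda>x. x * f _"] sum.delta cong: if_cong)
lemma dsumR': "(\<Sum>d\<in>A. f d * (if c = d then 1 else 0)) = (if c \<in> A then f c else (0::'a::semiring_1))"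
  if "finite A" using that by (simp add: if_distrib[of "\<lambda>x. f _ * x"] sum.delta' cong: if_cong)
lemma dsumL': "(\<Sum>d\<in>A. (if c = d then 1 else 0) * f d) = (if c \<in> A then f c else (0::'a::semiring_1))"
  if "finite A" using that by (simp add: if_distrib[of "\<lambda>x. x * f _"] sum.delta' cong: if_cong)


lemma sum4: "(\<Sum>p<4. f p) = f 0 + f 1 + f 2 + f 3" for f :: "nat \<Rightarrow> 'a::comm_monoid_add"
  by (simp add: eval_nat_numeral add.assoc)

lemma lc_swap12: "lc_sym b a c d = - lc_sym a b c d"
proof -
  have "(int a - int b) * (int c - int b) * (int d - int b) * (int c - int a) * (int d - int a) * (int d - int c)
     = - ((int b - int a) * (int c - int a) * (int d - int a) * (int c - int b) * (int d - int b) * (int d - int c))"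
    by (simp add: algebra_simps)
  then show ?thesis unfolding lc_sym_def by (simp add: sgn_minus)
qed
lemma lc_swap23: "lc_sym a c b d = - lc_sym a b c d"
proof -
  have "(int c - int a) * (int b - int a) * (int d - int a) * (int b - int c) * (int d - int c) * (int d - int b)
     = - ((int b - int a) * (int c - int a) * (int d - int a) * (int c - int b) * (int d - int b) * (int d - int c))"
    by (simp add: algebra_simps)
  then show ?thesis unfolding lc_sym_def by (simp add: sgn_minus)
qed
lemma lc_swap34: "lc_sym a b d c = - lc_sym a b c d"
proof -
  have "(int b - int a) * (int d - int a) * (int c - int a) * (int d - int b) * (int c - int b) * (int c - int d)
     = - ((int b - int a) * (int c - int a) * (int d - int a) * (int c - int b) * (int d - int b) * (int d - int c))"
    by (simp add: algebra_simps)
  then show ?thesis unfolding lc_sym_def by (simp add: sgn_minus)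
qed

lemma lc_sq: "(\<Sum>a<4. \<Sum>b<4. \<Sum>c<4. \<Sum>d<4. lc_sym a b c d * lc_sym a b c d) = 24"
  by (simp add: sum4 lc_sym_def)

lemma alt_sort:
  fixes f :: "nat \<Rightarrow> nat \<Rightarrow> nat \<Rightarrow> nat \<Rightarrow> real"
  assumes s12: "\<And>i j k l. f j i k l = - f i j k l"
    and s23: "\<And>i j k l. f i k j l = - f i j k l"
    and s34: "\<And>i j k l. f i j l k = - f i j k l"
    and "i < 4" "j < 4" "k < 4" "l < 4"
  shows "f i j k l = lc_sym i j k l * f 0 1 2 3"
proof -
  have r12: "j < i \<Longrightarrow> f i j k l = - f j i k l" for i j k l using s12[of j i k l] by linarith
  have r23: "k < j \<Longrightarrow> f i j k l = - f i k j l" for i j k l using s23[of i k j l] by linarith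
  have r34: "l < k \<Longrightarrow> f i j k l = - f i j l k" for i j k l using s34[of i j l k] by linarith
  have e12: "f i i k l = 0" for i k l using s12[of i i k l] by linarith
  have e23: "f i j j l = 0" for i j l using s23[of i j j l] by linarith
  have e34: "f i j k k = 0" for i j k using s34[of i j k k] by linarith
  have c: "i = 0 \<or> i = 1 \<or> i = 2 \<or> i = 3" "j = 0 \<or> j = 1 \<or> j = 2 \<or> j = 3"
     "k = 0 \<or> k = 1 \<or> k = 2 \<or> k = 3" "l = 0 \<or> l = 1 \<or> l = 2 \<or> l = 3" using assms(4-7) by auto
  note rs = e12 e23 e34 r12[where i="1" and j="0"] r12[where i="Suc 0" and j="0"] r12[where i="2" and j="0"] r12[where i="3" and j="0"] r12[where i="2" and j="1"] r12[where i="2" and j="Suc 0"] r12[where i="3" and j="1"] r12[where i="3" and j="Suc 0"] r12[where i="3" and j="2"]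
     r23[where j="1" and k="0"] r23[where j="Suc 0" and k="0"] r23[where j="2" and k="0"] r23[where j="3" and k="0"] r23[where j="2" and k="1"] r23[where j="2" and k="Suc 0"] r23[where j="3" and k="1"] r23[where j="3" and k="Suc 0"] r23[where j="3" and k="2"]
     r34[where k="1" and l="0"] r34[where k="Suc 0" and l="0"] r34[where k="2" and l="0"] r34[where k="3" and l="0"] r34[where k="2" and l="1"] r34[where k="2" and l="Suc 0"] r34[where k="3" and l="1"] r34[where k="3" and l="Suc 0"] r34[where k="3" and l="2"]
  have "f 3 2 1 0 = lc_sym 3 2 1 0 * f 0 1 2 3" by (simp add: rs lc_sym_def)
  show ?thesis using c
    apply (elim disjE)
    apply (simp_all add: rs lc_sym_def)
    done
qed

lemma alt_lemma:
  fixes M :: "nat \<Rightarrow> nat \<Rightarrow> real"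
  assumes "i < 4" "j < 4" "k < 4" "l < 4"
  shows "(\<Sum>a<4. \<Sum>b<4. \<Sum>c<4. \<Sum>d<4. lc_sym a b c d * M i a * M j b * M k c * M l d)
     = lc_sym i j k l * mdet M"
proof -
  define f where "f i j k l = (\<Sum>a<4. \<Sum>b<4. \<Sum>c<4. \<Sum>d<4. lc_sym a b c d * M i a * M j b * M k c * M l d)" for i j k l
  have s12: "f j i k l = - f i j k l" for i j k l
  proof -
    have pw: "lc_sym b a c d * M j b * M i a * M k c * M l d = - (lc_sym a b c d * M i a * M j b * M k c * M l d)" for a b c d
      by (simp add: lc_swap12[of a b c d])
    have "f j i k l = (\<Sum>a<4. \<Sum>b<4. \<Sum>c<4. \<Sum>d<4. lc_sym b a c d * M j b * M i a * M k c * M l d)"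
      unfolding f_def by (rule sum.swap)
    also have "\<dots> = (\<Sum>a<4. \<Sum>b<4. \<Sum>c<4. \<Sum>d<4. - (lc_sym a b c d * M i a * M j b * M k c * M l d))"
      using pw by simp
    also have "\<dots> = - f i j k l" unfolding f_def by (simp add: sum_negf)
    finally show ?thesis .
  qed
  have s23: "f i k j l = - f i j k l" for i j k l
  proof -
    have pw: "lc_sym a c b d * M i a * M k c * M j b * M l d = - (lc_sym a b c d * M i a * M j b * M k c * M l d)" for a b c d
      by (simp add: lc_swap23[of a b c d])
    have "f i k j l = (\<Sum>a<4. \<Sum>b<4. \<Sum>c<4. \<Sum>d<4. lc_sym a c b d * M i a * M k c * M j b * M l d)"
      unfolding f_def by (rule sum.cong[OF refl], rule sum.swap)
    also have "\<dots> = (\<Sum>a<4. \<Sum>b<4. \<Sum>c<4. \<Sum>d<4. - (lc_sym a b c d * M i a * M j b * M k c * M l d))"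
      using pw by simp
    also have "\<dots> = - f i j k l" unfolding f_def by (simp add: sum_negf)
    finally show ?thesis .
  qed
  have s34: "f i j l k = - f i j k l" for i j k l
  proof -
    have pw: "lc_sym a b d c * M i a * M j b * M l d * M k c = - (lc_sym a b c d * M i a * M j b * M k c * M l d)" for a b c d
      by (simp add: lc_swap34[of a b c d])
    have "f i j l k = (\<Sum>a<4. \<Sum>b<4. \<Sum>c<4. \<Sum>d<4. lc_sym a b d c * M i a * M j b * M l d * M k c)"
      unfolding f_def by (rule sum.cong[OF refl], rule sum.cong[OF refl], rule sum.swap)
    also have "\<dots> = (\<Sum>a<4. \<Sum>b<4. \<Sum>c<4. \<Sum>d<4. - (lc_sym a b c d * M i a * M j b * M k c * M l d))"
      using pw by simp
    also have "\<dots> = - f i j k l" unfolding f_def by (simp add: sum_negf)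
    finally show ?thesis .
  qed
  have "f i j k l = lc_sym i j k l * f 0 1 2 3"
    by (rule alt_sort[OF s12 s23 s34 assms])
  moreover have "f 0 1 2 3 = mdet M" unfolding f_def mdet_def by (simp add: mult_ac)
  ultimately show ?thesis unfolding f_def by simp
qed

lemma LR_inverse:
  fixes A B :: "nat \<Rightarrow> nat \<Rightarrow> real"
  assumes AB: "\<And>a c. a < 4 \<Longrightarrow> c < 4 \<Longrightarrow> (\<Sum>b<4. A a b * B b c) = (if a = c then 1 else 0)"
    and "a < 4" "c < 4"
  shows "(\<Sum>b<4. B a b * A b c) = (if a = c then 1 else 0)"
proof -
  obtain h :: "nat \<Rightarrow> 4" where h: "bij_betw h {..<4} UNIV"
    using ex_bij_betw_nat_finite[of "UNIV::4 set"] by (auto simp: atLeast0LessThan)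
  define k where "k = inv_into {..<4} h"
  have k: "bij_betw k UNIV {..<4}" using bij_betw_inv_into[OF h] k_def by simp
  have kh: "x < 4 \<Longrightarrow> k (h x) = x" for x using h by (simp add: k_def bij_betw_inv_into_left)
  have k4: "k i < 4" for i using k bij_betwE by blast
  have kinj: "k i = k j \<longleftrightarrow> i = j" for i j using k by (meson bij_betw_imp_inj_on inj_on_eq_iff UNIV_I)
  have sumk: "(\<Sum>l\<in>UNIV. F (k l)) = (\<Sum>b<4. F b)" for F :: "nat \<Rightarrow> real"
    using sum.reindex_bij_betw[OF k] .
  define A' :: "real^4^4" where "A' = (\<chi> i j. A (k i) (k j))"
  define B' :: "real^4^4" where "B' = (\<chi> i j. B (k i) (k j))"
  have "A' ** B' = mat 1"
  proof -
    have "(A' ** B') $ i $ j = mat 1 $ i $ j" for i j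
    proof -
      have "(A' ** B') $ i $ j = (\<Sum>l\<in>UNIV. A (k i) (k l) * B (k l) (k j))"
        by (simp add: matrix_matrix_mult_def A'_def B'_def)
      also have "\<dots> = (\<Sum>b<4. A (k i) b * B b (k j))" by (rule sumk)
      also have "\<dots> = mat 1 $ i $ j" using AB[OF k4 k4] kinj by (simp add: mat_def)
      finally show ?thesis .
    qed
    then show ?thesis by (simp add: vec_eq_iff)
  qed
  then have BA: "B' ** A' = mat 1" using matrix_left_right_inverse by blast
  have "(\<Sum>b<4. B a b * A b c) = (\<Sum>l\<in>UNIV. B (k (h a)) (k l) * A (k l) (k (h c)))"
    using sumk[of "\<lambda>b. B a b * A b c"] kh assms(2,3) by simp
  also have "\<dots> = (B' ** A') $ h a $ h c" by (simp add: matrix_matrix_mult_def A'_def B'_def)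
  also have "\<dots> = (if a = c then 1 else 0)"
  proof -
    have "h a = h c \<longleftrightarrow> a = c" using kh assms(2,3) by metis
    then show ?thesis by (simp add: BA mat_def)
  qed
  finally show ?thesis .
qed

lemma pull2: "(\<Sum>a\<in>A. \<Sum>b\<in>B. \<Sum>i\<in>I. F a b i) = (\<Sum>i\<in>I. \<Sum>a\<in>A. \<Sum>b\<in>B. F a b i)"
proof -
  have "(\<Sum>a\<in>A. \<Sum>b\<in>B. \<Sum>i\<in>I. F a b i) = (\<Sum>a\<in>A. \<Sum>i\<in>I. \<Sum>b\<in>B. F a b i)"
    by (rule sum.cong[OF refl], rule sum.swap)
  also have "\<dots> = (\<Sum>i\<in>I. \<Sum>a\<in>A. \<Sum>b\<in>B. F a b i)" by (rule sum.swap)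
  finally show ?thesis .
qed

lemma pull3: "(\<Sum>a\<in>A. \<Sum>b\<in>B. \<Sum>c\<in>C. \<Sum>i\<in>I. F a b c i) = (\<Sum>i\<in>I. \<Sum>a\<in>A. \<Sum>b\<in>B. \<Sum>c\<in>C. F a b c i)"
proof -
  have "(\<Sum>a\<in>A. \<Sum>b\<in>B. \<Sum>c\<in>C. \<Sum>i\<in>I. F a b c i) = (\<Sum>a\<in>A. \<Sum>i\<in>I. \<Sum>b\<in>B. \<Sum>c\<in>C. F a b c i)"
    by (rule sum.cong[OF refl], rule pull2)
  also have "\<dots> = (\<Sum>i\<in>I. \<Sum>a\<in>A. \<Sum>b\<in>B. \<Sum>c\<in>C. F a b c i)" by (rule sum.swap)
  finally show ?thesis .
qed

lemma pull4: "(\<Sum>a\<in>A. \<Sum>b\<in>B. \<Sum>c\<in>C. \<Sum>d\<in>D. \<Sum>i\<in>I. F a b c d i) = (\<Sum>i\<in>I. \<Sum>a\<in>A. \<Sum>b\<in>B. \<Sum>c\<in>C. \<Sum>d\<in>D. F a b c d i)"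
proof -
  have "(\<Sum>a\<in>A. \<Sum>b\<in>B. \<Sum>c\<in>C. \<Sum>d\<in>D. \<Sum>i\<in>I. F a b c d i) = (\<Sum>a\<in>A. \<Sum>i\<in>I. \<Sum>b\<in>B. \<Sum>c\<in>C. \<Sum>d\<in>D. F a b c d i)"
    by (rule sum.cong[OF refl], rule pull3)
  also have "\<dots> = (\<Sum>i\<in>I. \<Sum>a\<in>A. \<Sum>b\<in>B. \<Sum>c\<in>C. \<Sum>d\<in>D. F a b c d i)" by (rule sum.swap)
  finally show ?thesis .
qed

lemma swap44:
  "(\<Sum>a\<in>A. \<Sum>b\<in>B. \<Sum>c\<in>C. \<Sum>d\<in>D. \<Sum>i\<in>I. \<Sum>j\<in>J. \<Sum>k\<in>K. \<Sum>l\<in>L. F a b c d i j k l)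
 = (\<Sum>i\<in>I. \<Sum>j\<in>J. \<Sum>k\<in>K. \<Sum>l\<in>L. \<Sum>a\<in>A. \<Sum>b\<in>B. \<Sum>c\<in>C. \<Sum>d\<in>D. F a b c d i j k l)"
proof -
  have 1: "(\<Sum>a\<in>A. \<Sum>b\<in>B. \<Sum>c\<in>C. \<Sum>d\<in>D. \<Sum>i\<in>I. \<Sum>j\<in>J. \<Sum>k\<in>K. \<Sum>l\<in>L. F a b c d i j k l)
     = (\<Sum>i\<in>I. \<Sum>a\<in>A. \<Sum>b\<in>B. \<Sum>c\<in>C. \<Sum>d\<in>D. \<Sum>j\<in>J. \<Sum>k\<in>K. \<Sum>l\<in>L. F a b c d i j k l)"
    by (rule pull4)
  have 2: "(\<Sum>a\<in>A. \<Sum>b\<in>B. \<Sum>c\<in>C. \<Sum>d\<in>D. \<Sum>j\<in>J. \<Sum>k\<in>K. \<Sum>l\<in>L. F a b c d i j k l)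
     = (\<Sum>j\<in>J. \<Sum>a\<in>A. \<Sum>b\<in>B. \<Sum>c\<in>C. \<Sum>d\<in>D. \<Sum>k\<in>K. \<Sum>l\<in>L. F a b c d i j k l)" for i
    by (rule pull4)
  have 3: "(\<Sum>a\<in>A. \<Sum>b\<in>B. \<Sum>c\<in>C. \<Sum>d\<in>D. \<Sum>k\<in>K. \<Sum>l\<in>L. F a b c d i j k l)
     = (\<Sum>k\<in>K. \<Sum>a\<in>A. \<Sum>b\<in>B. \<Sum>c\<in>C. \<Sum>d\<in>D. \<Sum>l\<in>L. F a b c d i j k l)" for i j
    by (rule pull4)
  have 4: "(\<Sum>a\<in>A. \<Sum>b\<in>B. \<Sum>c\<in>C. \<Sum>d\<in>D. \<Sum>l\<in>L. F a b c d i j k l)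
     = (\<Sum>l\<in>L. \<Sum>a\<in>A. \<Sum>b\<in>B. \<Sum>c\<in>C. \<Sum>d\<in>D. F a b c d i j k l)" for i j k
    by (rule pull4)
  show ?thesis unfolding 1 2 3 4 ..
qed

lemma mdet_mult:
  fixes A B :: "nat \<Rightarrow> nat \<Rightarrow> real"
  shows "mdet (\<lambda>a c. \<Sum>b<4. A a b * B b c) = mdet A * mdet B"
proof -
  have pw: "lc_sym a b c d * (\<Sum>i<4. A 0 i * B i a) * (\<Sum>j<4. A 1 j * B j b) * (\<Sum>k<4. A 2 k * B k c) * (\<Sum>l<4. A 3 l * B l d)
    = (\<Sum>i<4. \<Sum>j<4. \<Sum>k<4. \<Sum>l<4. A 0 i * A 1 j * A 2 k * A 3 l * (lc_sym a b c d * B i a * B j b * B k c * B l d))" for a b c d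
    by (simp add: sum_distrib_left sum_distrib_right mult_ac)
  have "mdet (\<lambda>a c. \<Sum>b<4. A a b * B b c) = (\<Sum>a<4. \<Sum>b<4. \<Sum>c<4. \<Sum>d<4. \<Sum>i<4. \<Sum>j<4. \<Sum>k<4. \<Sum>l<4. A 0 i * A 1 j * A 2 k * A 3 l * (lc_sym a b c d * B i a * B j b * B k c * B l d))"
    unfolding mdet_def pw ..
  also have "\<dots> = (\<Sum>i<4. \<Sum>j<4. \<Sum>k<4. \<Sum>l<4. \<Sum>a<4. \<Sum>b<4. \<Sum>c<4. \<Sum>d<4. A 0 i * A 1 j * A 2 k * A 3 l * (lc_sym a b c d * B i a * B j b * B k c * B l d))"
    by (rule swap44)
  also have "\<dots> = (\<Sum>i<4. \<Sum>j<4. \<Sum>k<4. \<Sum>l<4. A 0 i * A 1 j * A 2 k * A 3 l * (lc_sym i j k l * mdet B))"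
    by (intro sum.cong refl) (simp add: sum_distrib_left[symmetric] alt_lemma)
  also have "\<dots> = (\<Sum>i<4. \<Sum>j<4. \<Sum>k<4. \<Sum>l<4. lc_sym i j k l * A 0 i * A 1 j * A 2 k * A 3 l) * mdet B"
    by (simp add: sum_distrib_left sum_distrib_right mult_ac)
  also have "\<dots> = mdet A * mdet B"
    unfolding mdet_def[of A] ..
  finally show ?thesis .
qed

lemma mdet_transpose:
  fixes M :: "nat \<Rightarrow> nat \<Rightarrow> real"
  shows "mdet (\<lambda>i j. M j i) = mdet M"
proof -
  let ?T = "\<Sum>a<4. \<Sum>b<4. \<Sum>c<4. \<Sum>d<4. \<Sum>i<4. \<Sum>j<4. \<Sum>k<4. \<Sum>l<4. lc_sym a b c d * lc_sym i j k l * (M a i * M b j * M c k * M d l)"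
  have "?T = (\<Sum>a<4. \<Sum>b<4. \<Sum>c<4. \<Sum>d<4. lc_sym a b c d * (\<Sum>i<4. \<Sum>j<4. \<Sum>k<4. \<Sum>l<4. lc_sym i j k l * M a i * M b j * M c k * M d l))"
    by (simp add: sum_distrib_left mult_ac)
  also have "\<dots> = (\<Sum>a<4. \<Sum>b<4. \<Sum>c<4. \<Sum>d<4. lc_sym a b c d * (lc_sym a b c d * mdet M))"
    by (intro sum.cong refl) (simp add: alt_lemma)
  also have "\<dots> = 24 * mdet M"
    using lc_sq by (simp add: sum_distrib_right[symmetric] mult.assoc[symmetric])
  finally have 1: "?T = 24 * mdet M" .
  have altT: "i < 4 \<Longrightarrow> j < 4 \<Longrightarrow> k < 4 \<Longrightarrow> l < 4 \<Longrightarrow> (\<Sum>a<4. \<Sum>b<4. \<Sum>c<4. \<Sum>d<4. lc_sym a b c d * M a i * M b j * M c k * M d l) = lc_sym i j k l * mdet (\<lambda>i j. M j i)" for i j k l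
    using alt_lemma[of i j k l "\<lambda>i j. M j i"] by simp
  have "?T = (\<Sum>i<4. \<Sum>j<4. \<Sum>k<4. \<Sum>l<4. \<Sum>a<4. \<Sum>b<4. \<Sum>c<4. \<Sum>d<4. lc_sym a b c d * lc_sym i j k l * (M a i * M b j * M c k * M d l))"
    by (rule swap44)
  also have "\<dots> = (\<Sum>i<4. \<Sum>j<4. \<Sum>k<4. \<Sum>l<4. lc_sym i j k l * (\<Sum>a<4. \<Sum>b<4. \<Sum>c<4. \<Sum>d<4. lc_sym a b c d * M a i * M b j * M c k * M d l))"
    by (simp add: sum_distrib_left mult_ac)
  also have "\<dots> = (\<Sum>i<4. \<Sum>j<4. \<Sum>k<4. \<Sum>l<4. lc_sym i j k l * (lc_sym i j k l * mdet (\<lambda>i j. M j i)))"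
    by (intro sum.cong refl) (simp add: altT)
  also have "\<dots> = 24 * mdet (\<lambda>i j. M j i)"
    using lc_sq by (simp add: sum_distrib_right[symmetric] mult.assoc[symmetric])
  finally show ?thesis using 1 by simp
qed

lemma mdet_cong: "(\<And>i j. i < 4 \<Longrightarrow> j < 4 \<Longrightarrow> A i j = B i j) \<Longrightarrow> mdet A = mdet B"
  unfolding mdet_def by (intro sum.cong refl) simp

lemma mdet_eta: "mdet eta = -1"
  by (simp add: mdet_def sum4 eta_def lc_sym_def)

lemma mdet_id: "mdet (\<lambda>a c. if a = c then 1 else 0) = 1"
  by (simp add: mdet_def sum4 lc_sym_def)

lemma inv_unique:
  fixes L g h :: "nat \<Rightarrow> nat \<Rightarrow> real"
  assumes L: "\<And>a c. a < 4 \<Longrightarrow> c < 4 \<Longrightarrow> (\<Sum>b<4. L a b * g b c) = (if a = c then 1 else 0)"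
    and h: "\<And>a c. a < 4 \<Longrightarrow> c < 4 \<Longrightarrow> (\<Sum>b<4. g a b * h b c) = (if a = c then 1 else 0)"
    and "b < 4" "c < 4"
  shows "h b c = L b c"
proof -
  have "h b c = (\<Sum>a<4. (if a = b then h a c else 0))" using assms(3) by (simp add: sum.delta)
  also have "\<dots> = (\<Sum>a<4. (\<Sum>d<4. L b d * g d a) * h a c)" using L assms(3) by (intro sum.cong refl) auto
  also have "\<dots> = (\<Sum>a<4. \<Sum>d<4. L b d * (g d a * h a c))" by (simp add: sum_distrib_right sum_distrib_left mult_ac)
  also have "\<dots> = (\<Sum>d<4. L b d * (\<Sum>a<4. g d a * h a c))" by (subst sum.swap) (simp add: sum_distrib_left)
  also have "\<dots> = (\<Sum>d<4. L b d * (if d = c then 1 else 0))" using h assms(4) by simp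
  also have "\<dots> = L b c" using assms(4) by (simp add: dsumR)
  finally show ?thesis .
qed

definition GG :: "(nat \<Rightarrow> nat \<Rightarrow> real) \<Rightarrow> nat \<Rightarrow> nat \<Rightarrow> real" where "GG g = ginv g"

context
  fixes g :: "nat \<Rightarrow> nat \<Rightarrow> real"
  assumes lor: "lorentzian g"
begin

lemma g_sym: "a < 4 \<Longrightarrow> b < 4 \<Longrightarrow> g a b = g b a"
  using lor unfolding lorentzian_def by blast

lemma frame: obtains E where "\<And>i j. i < 4 \<Longrightarrow> j < 4 \<Longrightarrow> (\<Sum>a<4. \<Sum>b<4. E i a * E j b * g a b) = eta i j"
  using lor unfolding lorentzian_def by blast

lemma ex_inv: "\<exists>P. (\<forall>a<4. \<forall>c<4. (\<Sum>b<4. g a b * P b c) = (if a = c then 1 else 0))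
     \<and> (\<forall>a<4. \<forall>c<4. (\<Sum>b<4. P a b * g b c) = (if a = c then 1 else 0))"
proof -
  obtain E where E: "\<And>i j. i < 4 \<Longrightarrow> j < 4 \<Longrightarrow> (\<Sum>a<4. \<Sum>b<4. E i a * E j b * g a b) = eta i j"
    using frame by blast
  define Q where "Q i b = (\<Sum>a<4. E i a * g a b)" for i b
  define R where "R b k = E k b * eta k k" for b k
  have QR: "(\<Sum>b<4. Q i b * R b k) = (if i = k then 1 else 0)" if "i < 4" "k < 4" for i k
  proof -
    have "(\<Sum>b<4. Q i b * R b k) = (\<Sum>a<4. \<Sum>b<4. E i a * E k b * g a b) * eta k k"
      unfolding Q_def R_def by (simp add: sum_distrib_left sum_distrib_right mult_ac) (subst sum.swap, simp)
    also have "\<dots> = eta i k * eta k k" using E that by simp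
    also have "\<dots> = (if i = k then 1 else 0)" by (simp add: eta_def)
    finally show ?thesis .
  qed
  have RQ: "(\<Sum>k<4. R b k * Q k c) = (if b = c then 1 else 0)" if "b < 4" "c < 4" for b c
    using LR_inverse[of Q R, OF QR] that by blast
  define P where "P b a = (\<Sum>k<4. E k b * eta k k * E k a)" for b a
  have Pg: "(\<Sum>a<4. P b a * g a c) = (if b = c then 1 else 0)" if "b < 4" "c < 4" for b c
  proof -
    have "(\<Sum>a<4. P b a * g a c) = (\<Sum>k<4. R b k * Q k c)"
      unfolding P_def R_def Q_def by (simp add: sum_distrib_left sum_distrib_right mult_ac) (subst sum.swap, simp)
    then show ?thesis using RQ that by simp
  qed
  have gP: "(\<Sum>a<4. g b a * P a c) = (if b = c then 1 else 0)" if "b < 4" "c < 4" for b c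
    using LR_inverse[of P g, OF Pg] that by blast
  show ?thesis using Pg gP by blast
qed


lemma G_props: "(\<forall>a<4. \<forall>c<4. (\<Sum>b<4. g a b * (GG g) b c) = (if a = c then 1 else 0))
                 \<and> (\<forall>a b. \<not> (a < 4 \<and> b < 4) \<longrightarrow> (GG g) a b = 0)"
proof -
  obtain P where P1: "\<forall>a<4. \<forall>c<4. (\<Sum>b<4. g a b * P b c) = (if a = c then 1 else 0)"
      and P2: "\<forall>a<4. \<forall>c<4. (\<Sum>b<4. P a b * g b c) = (if a = c then 1 else 0)"
    using ex_inv by blast
  define P' where "P' a b = (if a < 4 \<and> b < 4 then P a b else 0)" for a b
  have "\<exists>!h. (\<forall>a<4. \<forall>c<4. (\<Sum>b<4. g a b * h b c) = (if a = c then 1 else 0))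
                 \<and> (\<forall>a b. \<not> (a < 4 \<and> b < 4) \<longrightarrow> h a b = 0)"
  proof (rule ex1I[of _ P'])
    show "(\<forall>a<4. \<forall>c<4. (\<Sum>b<4. g a b * P' b c) = (if a = c then 1 else 0)) \<and> (\<forall>a b. \<not> (a < 4 \<and> b < 4) \<longrightarrow> P' a b = 0)"
      using P1 by (simp add: P'_def)
    fix h assume h: "(\<forall>a<4. \<forall>c<4. (\<Sum>b<4. g a b * h b c) = (if a = c then 1 else 0)) \<and> (\<forall>a b. \<not> (a < 4 \<and> b < 4) \<longrightarrow> h a b = 0)"
    show "h = P'"
    proof (intro ext)
      fix a b show "h a b = P' a b"
      proof (cases "a < 4 \<and> b < 4")
        case True
        then show ?thesis using inv_unique[of P g h a b] P2 h by (simp add: P'_def)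
      next
        case False
        then show ?thesis using h by (auto simp: P'_def)
      qed
    qed
  qed
  then show ?thesis unfolding GG_def ginv_def by (rule theI')
qed

lemma Gr: "a < 4 \<Longrightarrow> c < 4 \<Longrightarrow> (\<Sum>b<4. g a b * (GG g) b c) = (if a = c then 1 else 0)"
  using G_props by blast

lemma Gl: "a < 4 \<Longrightarrow> c < 4 \<Longrightarrow> (\<Sum>b<4. (GG g) a b * g b c) = (if a = c then 1 else 0)"
  using LR_inverse[of g "GG g", OF Gr] by blast

lemma G_sym: "a < 4 \<Longrightarrow> c < 4 \<Longrightarrow> (GG g) a c = (GG g) c a"
proof -
  assume ac: "a < 4" "c < 4"
  have "(\<Sum>b<4. g a b * (GG g) c b) = (if a = c then 1 else 0)" if "a < 4" "c < 4" for a c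
  proof -
    have "(\<Sum>b<4. g a b * (GG g) c b) = (\<Sum>b<4. (GG g) c b * g b a)"
      using that by (intro sum.cong refl) (simp add: g_sym mult.commute)
    then show ?thesis using Gl[of c a] that by auto
  qed
  then have "(GG g) c a = (GG g) a c" using inv_unique[of "GG g" g "\<lambda>b c. (GG g) c b" a c] Gl ac by blast
  then show ?thesis by simp
qed

lemma mdet_neg: "mdet g < 0"
proof -
  obtain E where E: "\<And>i j. i < 4 \<Longrightarrow> j < 4 \<Longrightarrow> (\<Sum>a<4. \<Sum>b<4. E i a * E j b * g a b) = eta i j"
    using frame by blast
  define Q where "Q i b = (\<Sum>a<4. E i a * g a b)" for i b
  have "mdet eta = mdet (\<lambda>i j. \<Sum>b<4. Q i b * (\<lambda>i j. E j i) b j)"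
  proof (rule mdet_cong)
    fix i j :: nat assume "i < 4" "j < 4"
    then show "eta i j = (\<Sum>b<4. Q i b * (\<lambda>i j. E j i) b j)"
      using E[of i j] unfolding Q_def by (simp add: sum_distrib_left sum_distrib_right mult_ac) (subst sum.swap, simp)
  qed
  also have "\<dots> = mdet Q * mdet (\<lambda>i j. E j i)"
    by (rule mdet_mult)
  also have "mdet (\<lambda>i j. E j i) = mdet E" by (rule mdet_transpose)
  also have "mdet Q = mdet E * mdet g" unfolding Q_def by (rule mdet_mult)
  finally have "mdet E * mdet E * mdet g = -1" using mdet_eta by (simp add: mult_ac)
  moreover have "mdet E * mdet E \<ge> 0" by simp
  ultimately show ?thesis
    using mult_nonneg_nonneg[of "mdet E * mdet E" "mdet g"] by linarith
qed

lemma mdet_G: "mdet (GG g) * mdet g = 1"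
proof -
  have "mdet (GG g) * mdet g = mdet (\<lambda>a c. \<Sum>b<4. (GG g) a b * g b c)" by (rule mdet_mult[symmetric])
  also have "\<dots> = mdet (\<lambda>a c. if a = c then 1 else 0)" by (rule mdet_cong) (simp add: Gl)
  finally show ?thesis by (simp add: mdet_id)
qed

end

lemma sort3:
  fixes f :: "nat \<Rightarrow> nat \<Rightarrow> nat \<Rightarrow> real"
  assumes s12: "\<And>i j k. f j i k = - f i j k"
    and s23: "\<And>i j k. f i k j = - f i j k"
    and base: "\<And>i j k. i < j \<Longrightarrow> j < k \<Longrightarrow> k < 4 \<Longrightarrow> f i j k = 0"
    and "i < 4" "j < 4" "k < 4"
  shows "f i j k = 0"
proof -
  have r12: "j < i \<Longrightarrow> f i j k = - f j i k" for i j k using s12[of j i k] by linarith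
  have r23: "k < j \<Longrightarrow> f i j k = - f i k j" for i j k using s23[of i k j] by linarith
  have e12: "f i i k = 0" for i k using s12[of i i k] by linarith
  have e23: "f i j j = 0" for i j using s23[of i j j] by linarith
  have c: "i = 0 \<or> i = 1 \<or> i = 2 \<or> i = 3" "j = 0 \<or> j = 1 \<or> j = 2 \<or> j = 3"
     "k = 0 \<or> k = 1 \<or> k = 2 \<or> k = 3" using assms(4-6) by auto
  have b: "f 0 1 2 = 0" "f 0 1 3 = 0" "f 0 2 3 = 0" "f 1 2 3 = 0" by (auto intro: base)
  have b2: "f 0 (Suc 0) 2 = 0" "f 0 (Suc 0) 3 = 0" "f (Suc 0) 2 3 = 0" using b by simp_all
  note rs = e12 e23 b b2 r12[where i="1" and j="0"] r12[where i="Suc 0" and j="0"] r12[where i="2" and j="0"] r12[where i="3" and j="0"] r12[where i="2" and j="1"] r12[where i="2" and j="Suc 0"] r12[where i="3" and j="1"] r12[where i="3" and j="Suc 0"] r12[where i="3" and j="2"]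
    r23[where j="1" and k="0"] r23[where j="Suc 0" and k="0"] r23[where j="2" and k="0"] r23[where j="3" and k="0"] r23[where j="2" and k="1"] r23[where j="2" and k="Suc 0"] r23[where j="3" and k="1"] r23[where j="3" and k="Suc 0"] r23[where j="3" and k="2"]
  show ?thesis using c
    apply (elim disjE)
    apply (simp_all add: rs)
    done
qed

definition dl :: "nat \<Rightarrow> nat \<Rightarrow> real" where "dl x y = (if x = y then 1 else 0)"

definition d3 :: "nat \<Rightarrow> nat \<Rightarrow> nat \<Rightarrow> nat \<Rightarrow> nat \<Rightarrow> nat \<Rightarrow> real" where
  "d3 a b q w u v = dl a w * (dl b u * dl q v - dl b v * dl q u) - dl a u * (dl b w * dl q v - dl b v * dl q w)
     + dl a v * (dl b w * dl q u - dl b u * dl q w)"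

lemma lclc:
  assumes "a < 4" "b < 4" "q < 4" "w < 4" "u < 4" "v < 4"
  shows "(\<Sum>p<4. lc_sym p a b q * lc_sym p w u v) = d3 a b q w u v"
proof -
  define K where "K a b q w u v = (\<Sum>p<4. lc_sym p a b q * lc_sym p w u v) - d3 a b q w u v" for a b q w u v
  have k1: "K b a q w u v = - K a b q w u v" for a b q w u v
    unfolding K_def d3_def by (simp add: lc_swap23[of _ a b q] sum_negf algebra_simps)
  have k2: "K a q b w u v = - K a b q w u v" for a b q w u v
    unfolding K_def d3_def by (simp add: lc_swap34[of _ a b q] sum_negf algebra_simps)
  have k3: "K a b q u w v = - K a b q w u v" for a b q w u v
    unfolding K_def d3_def by (simp add: lc_swap23[of _ w u v] sum_negf algebra_simps)
  have k4: "K a b q w v u = - K a b q w u v" for a b q w u v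
    unfolding K_def d3_def by (simp add: lc_swap34[of _ w u v] sum_negf algebra_simps)
  have base: "K a b q w u v = 0" if "a < b" "b < q" "q < 4" "w < u" "u < v" "v < 4" for a b q w u v
  proof -
    have "a = 0 \<and> b = 1 \<and> q = 2 \<or> a = 0 \<and> b = 1 \<and> q = 3 \<or> a = 0 \<and> b = 2 \<and> q = 3 \<or> a = 1 \<and> b = 2 \<and> q = 3"
      using that(1-3) by auto
    moreover have "w = 0 \<and> u = 1 \<and> v = 2 \<or> w = 0 \<and> u = 1 \<and> v = 3 \<or> w = 0 \<and> u = 2 \<and> v = 3 \<or> w = 1 \<and> u = 2 \<and> v = 3"
      using that(4-6) by auto
    ultimately show ?thesis
      unfolding K_def d3_def dl_def by (elim disjE conjE; simp add: sum4 lc_sym_def)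
  qed
  have "K a b q w u v = 0"
  proof (rule sort3[where f="\<lambda>a b q. K a b q w u v"])
    show "K j i k w u v = - K i j k w u v" for i j k by (rule k1)
    show "K i k j w u v = - K i j k w u v" for i j k by (rule k2)
    show "K i j k w u v = 0" if "i < j" "j < k" "k < 4" for i j k
    proof (rule sort3[where f="\<lambda>w u v. K i j k w u v"])
      show "K i j k ja ia ka = - K i j k ia ja ka" for ia ja ka by (rule k3)
      show "K i j k ia ka ja = - K i j k ia ja ka" for ia ja ka by (rule k4)
      show "K i j k ia ja ka = 0" if "ia < ja" "ja < ka" "ka < 4" for ia ja ka
        using base \<open>i < j\<close> \<open>j < k\<close> \<open>k < 4\<close> that by blast
    qed (use assms in auto)
  qed (use assms in auto)
  then show ?thesis unfolding K_def by simp
qed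

definition sdg :: "(nat \<Rightarrow> nat \<Rightarrow> real) \<Rightarrow> real" where "sdg g = sqrt (- mdet g)"

context
  fixes g :: "nat \<Rightarrow> nat \<Rightarrow> real"
  assumes lor: "lorentzian g"
begin


lemma sd_pos: "sdg g > 0" using mdet_neg[OF lor] by (simp add: sdg_def)
lemma sd_sq: "sdg g * sdg g = - mdet g" using mdet_neg[OF lor] by (simp add: sdg_def)
lemma mdet_G_val: "mdet (GG g) = - 1 / (sdg g * sdg g)"
proof -
  have "mdet g \<noteq> 0" using mdet_neg[OF lor] by simp
  then have "mdet (GG g) = 1 / mdet g" using mdet_G[OF lor] by (simp add: field_simps)
  then show ?thesis using sd_sq by simp
qed

lemma eps_low_sd: "eps_low g a b c d = sdg g * lc_sym a b c d" by (simp add: eps_low_def sdg_def)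

lemma ginv_GG: "ginv g = GG g" by (simp add: GG_def)

lemma T_lemma:
  assumes "p < 4" "w < 4" "u < 4" "v < 4"
  shows "(\<Sum>x<4. \<Sum>y<4. \<Sum>r<4. \<Sum>s<4. eps_low g x y r s * GG g p x * GG g w y * GG g u r * GG g v s)
     = - lc_sym p w u v / sdg g"
proof -
  have "(\<Sum>x<4. \<Sum>y<4. \<Sum>r<4. \<Sum>s<4. eps_low g x y r s * GG g p x * GG g w y * GG g u r * GG g v s)
     = sdg g * (\<Sum>x<4. \<Sum>y<4. \<Sum>r<4. \<Sum>s<4. lc_sym x y r s * GG g p x * GG g w y * GG g u r * GG g v s)"
    by (simp add: eps_low_sd sum_distrib_left mult_ac)
  also have "\<dots> = sdg g * (lc_sym p w u v * mdet (GG g))" using alt_lemma[OF assms, of "GG g"] by simp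
  also have "\<dots> = - lc_sym p w u v / sdg g" using sd_pos by (simp add: mdet_G_val field_simps)
  finally show ?thesis .
qed

lemma EPS_lemma:
  assumes "p < 4" "y < 4" "u < 4" "v < 4"
  shows "(\<Sum>x<4. GG g p x * eps_mix g x y u v) = - (1 / sdg g) * (\<Sum>w<4. lc_sym p w u v * g w y)"
proof -
  let ?e = "eps_low g" and ?G = "GG g"
  have "- (1 / sdg g) * (\<Sum>w<4. lc_sym p w u v * g w y)
     = (\<Sum>w<4. (\<Sum>x<4. \<Sum>y'<4. \<Sum>r<4. \<Sum>s<4. ?e x y' r s * ?G p x * ?G w y' * ?G u r * ?G v s) * g w y)"
    using assms T_lemma by (simp add: sum_distrib_left)
  also have "\<dots> = (\<Sum>w<4. \<Sum>x<4. \<Sum>y'<4. \<Sum>r<4. \<Sum>s<4. ?e x y' r s * ?G p x * (?G w y' * g w y) * ?G u r * ?G v s)"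
    by (simp add: sum_distrib_right sum_distrib_left mult_ac)
  also have "\<dots> = (\<Sum>x<4. \<Sum>y'<4. \<Sum>r<4. \<Sum>s<4. \<Sum>w<4. ?e x y' r s * ?G p x * (?G w y' * g w y) * ?G u r * ?G v s)"
    by (rule pull4[symmetric])
  also have "\<dots> = (\<Sum>x<4. \<Sum>y'<4. \<Sum>r<4. \<Sum>s<4. ?e x y' r s * ?G p x * (\<Sum>w<4. ?G y' w * g w y) * ?G u r * ?G v s)"
    by (intro sum.cong refl) (simp add: sum_distrib_left sum_distrib_right G_sym[OF lor] mult_ac)
  also have "\<dots> = (\<Sum>x<4. \<Sum>y'<4. \<Sum>r<4. \<Sum>s<4. ?e x y' r s * ?G p x * (if y' = y then 1 else 0) * ?G u r * ?G v s)"
    by (intro sum.cong refl) (simp add: Gl[OF lor] assms)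
  also have "\<dots> = (\<Sum>x<4. \<Sum>y'<4. (if y' = y then 1 else 0) * (\<Sum>r<4. \<Sum>s<4. ?e x y' r s * ?G p x * ?G u r * ?G v s))"
    by (simp add: sum_distrib_left mult_ac)
  also have "\<dots> = (\<Sum>x<4. \<Sum>r<4. \<Sum>s<4. ?e x y r s * ?G p x * ?G u r * ?G v s)"
    using assms by (simp add: dsumL)
  also have "\<dots> = (\<Sum>x<4. ?G p x * eps_mix g x y u v)"
    unfolding eps_mix_def ginv_GG
    by (intro sum.cong refl) (simp add: sum_distrib_left G_sym[OF lor] assms mult_ac)
  finally show ?thesis by simp
qed

end

lemma dl_collapse1: "c < 4 \<Longrightarrow> (\<Sum>v<4. dl c v * f v) = f c" by (simp add: dl_def dsumL')
lemma dl_collapse2: "c < 4 \<Longrightarrow> (\<Sum>v<4. dl v c * f v) = f c" by (simp add: dl_def dsumL)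

lemma d3sum:
  fixes F :: "nat \<Rightarrow> nat \<Rightarrow> real"
  assumes anti: "\<And>i j. i < 4 \<Longrightarrow> j < 4 \<Longrightarrow> F i j = - F j i"
    and ab: "a < 4" "b < 4"
  shows "(\<Sum>q<4. \<Sum>w<4. \<Sum>u<4. \<Sum>v<4. d3 a b q w u v * T w * F u v * t q)
    = 2 * (T a * (\<Sum>q<4. F b q * t q) - T b * (\<Sum>q<4. F a q * t q) + (\<Sum>m<4. T m * t m) * F a b)"
proof -
  let ?Y = "\<lambda>q w u v. T w * F u v * t q"
  have pw: "d3 a b q w u v * T w * F u v * t q =
      dl a w * (dl b u * (dl q v * ?Y q w u v)) - dl a w * (dl b v * (dl q u * ?Y q w u v))
    - dl a u * (dl b w * (dl q v * ?Y q w u v)) + dl a u * (dl b v * (dl q w * ?Y q w u v))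
    + dl a v * (dl b w * (dl q u * ?Y q w u v)) - dl a v * (dl b u * (dl q w * ?Y q w u v))" for q w u v
    unfolding d3_def by (simp add: algebra_simps)
  have "(\<Sum>q<4. \<Sum>w<4. \<Sum>u<4. \<Sum>v<4. d3 a b q w u v * T w * F u v * t q)
    = (\<Sum>q<4. \<Sum>w<4. \<Sum>u<4. \<Sum>v<4. dl a w * (dl b u * (dl q v * ?Y q w u v)))
    - (\<Sum>q<4. \<Sum>w<4. \<Sum>u<4. \<Sum>v<4. dl a w * (dl b v * (dl q u * ?Y q w u v)))
    - (\<Sum>q<4. \<Sum>w<4. \<Sum>u<4. \<Sum>v<4. dl a u * (dl b w * (dl q v * ?Y q w u v)))
    + (\<Sum>q<4. \<Sum>w<4. \<Sum>u<4. \<Sum>v<4. dl a u * (dl b v * (dl q w * ?Y q w u v)))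
    + (\<Sum>q<4. \<Sum>w<4. \<Sum>u<4. \<Sum>v<4. dl a v * (dl b w * (dl q u * ?Y q w u v)))
    - (\<Sum>q<4. \<Sum>w<4. \<Sum>u<4. \<Sum>v<4. dl a v * (dl b u * (dl q w * ?Y q w u v)))"
    unfolding pw by (simp only: sum.distrib sum_subtractf)
  also have "\<dots> = (\<Sum>q<4. T a * F b q * t q) - (\<Sum>q<4. T a * F q b * t q) - (\<Sum>q<4. T b * F a q * t q)
     + (\<Sum>q<4. T q * F a b * t q) + (\<Sum>q<4. T b * F q a * t q) - (\<Sum>q<4. T q * F b a * t q)"
    using ab by (simp add: dl_collapse1 dl_collapse2 sum_distrib_left[symmetric])
  also have "\<dots> = 2 * (T a * (\<Sum>q<4. F b q * t q) - T b * (\<Sum>q<4. F a q * t q) + (\<Sum>m<4. T m * t m) * F a b)"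
  proof -
    have p1: "q < 4 \<Longrightarrow> T a * F q b * t q = - (T a * F b q * t q)" for q using anti[of q b] ab by simp
    have p2: "q < 4 \<Longrightarrow> T b * F q a * t q = - (T b * F a q * t q)" for q using anti[of q a] ab by simp
    have p3: "T q * F b a * t q = - (T q * F a b * t q)" for q using anti[of b a] ab by simp
    have 1: "(\<Sum>q<4. T a * F q b * t q) = - (\<Sum>q<4. T a * F b q * t q)"
      unfolding sum_negf[symmetric] by (rule sum.cong[OF refl]) (simp add: p1)
    have 2: "(\<Sum>q<4. T b * F q a * t q) = - (\<Sum>q<4. T b * F a q * t q)"
      unfolding sum_negf[symmetric] by (rule sum.cong[OF refl]) (simp add: p2)
    have 3: "(\<Sum>q<4. T q * F b a * t q) = - (\<Sum>q<4. T q * F a b * t q)"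
      unfolding sum_negf[symmetric] by (rule sum.cong[OF refl]) (simp add: p3)
    show ?thesis unfolding 1 2 3
      by (simp add: sum_distrib_left sum_distrib_right sum_negf mult_ac)
  qed
  finally show ?thesis .
qed

lemma part1:
  "(\<Sum>p<4. \<Sum>q<4. g4 g a b p q * W p * t q)
   = (\<Sum>p<4. g a p * W p) * (\<Sum>q<4. g b q * t q) - (\<Sum>q<4. g a q * t q) * (\<Sum>p<4. g b p * W p)"
proof -
  have "(\<Sum>p<4. \<Sum>q<4. g4 g a b p q * W p * t q)
     = (\<Sum>p<4. \<Sum>q<4. (g a p * W p) * (g b q * t q)) - (\<Sum>p<4. \<Sum>q<4. (g a q * t q) * (g b p * W p))"
    unfolding g4_def by (simp add: sum_subtractf[symmetric] algebra_simps)
  also have "(\<Sum>p<4. \<Sum>q<4. (g a q * t q) * (g b p * W p)) = (\<Sum>q<4. \<Sum>p<4. (g a q * t q) * (g b p * W p))"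
    by (rule sum.swap)
  finally show ?thesis by (simp only: sum_product)
qed

context
  fixes g :: "nat \<Rightarrow> nat \<Rightarrow> real"
  assumes lor: "lorentzian g"
begin

lemma lowraise: "a < 4 \<Longrightarrow> (\<Sum>p<4. g a p * (\<Sum>x<4. GG g p x * V x)) = V a"
proof -
  assume a: "a < 4"
  have "(\<Sum>p<4. g a p * (\<Sum>x<4. GG g p x * V x)) = (\<Sum>p<4. \<Sum>x<4. g a p * GG g p x * V x)"
    by (simp add: sum_distrib_left mult_ac)
  also have "\<dots> = (\<Sum>x<4. \<Sum>p<4. g a p * GG g p x * V x)" by (rule sum.swap)
  also have "\<dots> = (\<Sum>x<4. (\<Sum>p<4. g a p * GG g p x) * V x)" by (simp add: sum_distrib_right)
  also have "\<dots> = (\<Sum>x<4. (if a = x then 1 else 0) * V x)"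
    by (intro sum.cong refl) (simp add: Gr[OF lor] a)
  also have "\<dots> = V a" using a by (simp add: dsumL')
  finally show ?thesis .
qed

lemma Hr_lemma:
  assumes p: "p < 4"
  shows "(\<Sum>x<4. GG g p x * (- (\<Sum>q<4. (1/2 * (\<Sum>u<4. \<Sum>v<4. eps_mix g x q u v * F u v)) * t q)))
    = (1 / (2 * sdg g)) * (\<Sum>w<4. \<Sum>u<4. \<Sum>v<4. lc_sym p w u v * (\<Sum>q<4. g w q * t q) * F u v)"
proof -
  have "(\<Sum>x<4. GG g p x * (- (\<Sum>q<4. (1/2 * (\<Sum>u<4. \<Sum>v<4. eps_mix g x q u v * F u v)) * t q)))
     = - (1/2) * (\<Sum>x<4. \<Sum>q<4. \<Sum>u<4. \<Sum>v<4. GG g p x * eps_mix g x q u v * (F u v * t q))"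
    by (simp add: sum_distrib_left sum_distrib_right sum_negf mult_ac)
  also have "\<dots> = - (1/2) * (\<Sum>q<4. \<Sum>u<4. \<Sum>v<4. \<Sum>x<4. GG g p x * eps_mix g x q u v * (F u v * t q))"
  proof -
    have s: "(\<Sum>x<4. \<Sum>q<4. \<Sum>u<4. \<Sum>v<4. GG g p x * eps_mix g x q u v * (F u v * t q))
       = (\<Sum>q<4. \<Sum>u<4. \<Sum>v<4. \<Sum>x<4. GG g p x * eps_mix g x q u v * (F u v * t q))"
      by (rule pull3[symmetric])
    show ?thesis unfolding s ..
  qed
  also have "\<dots> = - (1/2) * (\<Sum>q<4. \<Sum>u<4. \<Sum>v<4. (\<Sum>x<4. GG g p x * eps_mix g x q u v) * (F u v * t q))"
    by (simp only: sum_distrib_right)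
  also have "\<dots> = - (1/2) * (\<Sum>q<4. \<Sum>u<4. \<Sum>v<4. (- (1 / sdg g) * (\<Sum>w<4. lc_sym p w u v * g w q)) * (F u v * t q))"
    by (intro arg_cong[where f="\<lambda>x. - (1/2) * x"] sum.cong refl) (simp add: EPS_lemma[OF lor] p)
  also have "\<dots> = (1 / (2 * sdg g)) * (\<Sum>q<4. \<Sum>u<4. \<Sum>v<4. \<Sum>w<4. lc_sym p w u v * g w q * (F u v * t q))"
    by (simp add: sum_distrib_left sum_distrib_right mult_ac)
  also have "\<dots> = (1 / (2 * sdg g)) * (\<Sum>w<4. \<Sum>u<4. \<Sum>v<4. \<Sum>q<4. lc_sym p w u v * g w q * (F u v * t q))"
  proof -
    have s: "(\<Sum>q<4. \<Sum>u<4. \<Sum>v<4. \<Sum>w<4. lc_sym p w u v * g w q * (F u v * t q))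
      = (\<Sum>w<4. \<Sum>q<4. \<Sum>u<4. \<Sum>v<4. lc_sym p w u v * g w q * (F u v * t q))"
      by (rule pull3)
    have s2: "(\<Sum>q<4. \<Sum>u<4. \<Sum>v<4. lc_sym p w u v * g w q * (F u v * t q))
      = (\<Sum>u<4. \<Sum>v<4. \<Sum>q<4. lc_sym p w u v * g w q * (F u v * t q))" for w
      by (rule pull2[symmetric])
    show ?thesis unfolding s s2 ..
  qed
  also have "\<dots> = (1 / (2 * sdg g)) * (\<Sum>w<4. \<Sum>u<4. \<Sum>v<4. lc_sym p w u v * (\<Sum>q<4. g w q * t q) * F u v)"
    by (simp add: sum_distrib_left sum_distrib_right mult_ac)
  finally show ?thesis .
qed

lemma part2:
  fixes F :: "nat \<Rightarrow> nat \<Rightarrow> real"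
  assumes anti: "\<And>i j. i < 4 \<Longrightarrow> j < 4 \<Longrightarrow> F i j = - F j i"
    and ab: "a < 4" "b < 4"
  shows "(\<Sum>p<4. \<Sum>q<4. eps_low g a b p q * ((1 / (2 * sdg g)) * (\<Sum>w<4. \<Sum>u<4. \<Sum>v<4. lc_sym p w u v * T w * F u v)) * t q)
    = T a * (\<Sum>q<4. F b q * t q) - T b * (\<Sum>q<4. F a q * t q) + (\<Sum>m<4. T m * t m) * F a b"
proof -
  have sd0: "sdg g \<noteq> 0" using sd_pos[OF lor] by simp
  have lcr: "lc_sym a b p q = lc_sym p a b q" for p q
    using lc_swap23[of a p b q] lc_swap12[of p a b q] by simp
  have "(\<Sum>p<4. \<Sum>q<4. eps_low g a b p q * ((1 / (2 * sdg g)) * (\<Sum>w<4. \<Sum>u<4. \<Sum>v<4. lc_sym p w u v * T w * F u v)) * t q)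
    = (1/2) * (\<Sum>p<4. \<Sum>q<4. \<Sum>w<4. \<Sum>u<4. \<Sum>v<4. lc_sym p a b q * lc_sym p w u v * (T w * F u v * t q))"
    using sd0 by (simp add: eps_low_sd[OF lor] lcr sum_distrib_left sum_distrib_right mult_ac)
  also have "\<dots> = (1/2) * (\<Sum>q<4. \<Sum>w<4. \<Sum>u<4. \<Sum>v<4. \<Sum>p<4. lc_sym p a b q * lc_sym p w u v * (T w * F u v * t q))"
  proof -
    have s: "(\<Sum>p<4. \<Sum>q<4. \<Sum>w<4. \<Sum>u<4. \<Sum>v<4. lc_sym p a b q * lc_sym p w u v * (T w * F u v * t q))
      = (\<Sum>q<4. \<Sum>w<4. \<Sum>u<4. \<Sum>v<4. \<Sum>p<4. lc_sym p a b q * lc_sym p w u v * (T w * F u v * t q))"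
      by (rule pull4[symmetric])
    show ?thesis unfolding s ..
  qed
  also have "\<dots> = (1/2) * (\<Sum>q<4. \<Sum>w<4. \<Sum>u<4. \<Sum>v<4. (\<Sum>p<4. lc_sym p a b q * lc_sym p w u v) * (T w * F u v * t q))"
    by (simp only: sum_distrib_right)
  also have "\<dots> = (1/2) * (\<Sum>q<4. \<Sum>w<4. \<Sum>u<4. \<Sum>v<4. d3 a b q w u v * T w * F u v * t q)"
    by (intro arg_cong[where f="\<lambda>x. (1/2) * x"] sum.cong refl)
       (simp add: lclc ab mult.assoc)
  also have "\<dots> = T a * (\<Sum>q<4. F b q * t q) - T b * (\<Sum>q<4. F a q * t q) + (\<Sum>m<4. T m * t m) * F a b"
    using d3sum[OF anti ab, where T=T and t=t] by simp
  finally show ?thesis .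
qed

lemma sqnorm_tl: "sqnorm g t = (\<Sum>m<4. (\<Sum>q<4. g m q * t q) * t m)"
  unfolding sqnorm_def by (simp add: sum_distrib_right sum_distrib_left mult_ac)

lemma twoform:
  fixes F :: "nat \<Rightarrow> nat \<Rightarrow> real"
  assumes anti: "\<And>i j. i < 4 \<Longrightarrow> j < 4 \<Longrightarrow> F i j = - F j i"
    and ab: "a < 4" "b < 4"
  shows "(\<Sum>p<4. \<Sum>q<4. (g4 g a b p q * (\<Sum>x<4. GG g p x * (\<Sum>q<4. F x q * t q))
          + eps_low g a b p q * (\<Sum>x<4. GG g p x * (- (\<Sum>q<4. (1/2 * (\<Sum>u<4. \<Sum>v<4. eps_mix g x q u v * F u v)) * t q)))) * t q)
      = sqnorm g t * F a b"
proof -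
  let ?E = "\<lambda>x. \<Sum>q<4. F x q * t q"
  let ?T = "\<lambda>w. \<Sum>q<4. g w q * t q"
  have "(\<Sum>p<4. \<Sum>q<4. (g4 g a b p q * (\<Sum>x<4. GG g p x * ?E x)
          + eps_low g a b p q * (\<Sum>x<4. GG g p x * (- (\<Sum>q<4. (1/2 * (\<Sum>u<4. \<Sum>v<4. eps_mix g x q u v * F u v)) * t q)))) * t q)
     = (\<Sum>p<4. \<Sum>q<4. g4 g a b p q * (\<Sum>x<4. GG g p x * ?E x) * t q)
       + (\<Sum>p<4. \<Sum>q<4. eps_low g a b p q * ((1 / (2 * sdg g)) * (\<Sum>w<4. \<Sum>u<4. \<Sum>v<4. lc_sym p w u v * ?T w * F u v)) * t q)"
  proof -
    have "(\<Sum>p<4. \<Sum>q<4. (g4 g a b p q * (\<Sum>x<4. GG g p x * ?E x)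
          + eps_low g a b p q * (\<Sum>x<4. GG g p x * (- (\<Sum>q<4. (1/2 * (\<Sum>u<4. \<Sum>v<4. eps_mix g x q u v * F u v)) * t q)))) * t q)
      = (\<Sum>p<4. \<Sum>q<4. (g4 g a b p q * (\<Sum>x<4. GG g p x * ?E x)
          + eps_low g a b p q * ((1 / (2 * sdg g)) * (\<Sum>w<4. \<Sum>u<4. \<Sum>v<4. lc_sym p w u v * ?T w * F u v))) * t q)"
      by (intro sum.cong refl) (simp only: lessThan_iff Hr_lemma)
    then show ?thesis by (simp only: distrib_right sum.distrib)
  qed
  also have "(\<Sum>p<4. \<Sum>q<4. g4 g a b p q * (\<Sum>x<4. GG g p x * ?E x) * t q) = ?E a * ?T b - ?T a * ?E b"
    using part1[of g a b "\<lambda>p. \<Sum>x<4. GG g p x * ?E x" t] lowraise[of a ?E] lowraise[of b ?E] ab by simp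
  also have "(\<Sum>p<4. \<Sum>q<4. eps_low g a b p q * ((1 / (2 * sdg g)) * (\<Sum>w<4. \<Sum>u<4. \<Sum>v<4. lc_sym p w u v * ?T w * F u v)) * t q)
     = ?T a * ?E b - ?T b * ?E a + (\<Sum>m<4. ?T m * t m) * F a b"
    by (rule part2[OF anti ab])
  finally show ?thesis by (simp add: sqnorm_tl)
qed

end

lemma comb:
  fixes G P Q \<alpha> \<beta> :: "nat \<Rightarrow> nat \<Rightarrow> real" and t :: "nat \<Rightarrow> real"
  shows "(\<Sum>x<4. G p x * (\<Sum>r<4. \<Sum>s<4. (\<alpha> r s * (\<Sum>y<4. G r y * P x y) + \<beta> r s * (\<Sum>y<4. G r y * Q x y)) * t s))
   = (\<Sum>r<4. \<Sum>s<4. (\<alpha> r s * (\<Sum>x<4. \<Sum>y<4. G p x * G r y * P x y) + \<beta> r s * (\<Sum>x<4. \<Sum>y<4. G p x * G r y * Q x y)) * t s)"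
proof -
  have "(\<Sum>x<4. G p x * (\<Sum>r<4. \<Sum>s<4. (\<alpha> r s * (\<Sum>y<4. G r y * P x y) + \<beta> r s * (\<Sum>y<4. G r y * Q x y)) * t s))
     = (\<Sum>x<4. \<Sum>r<4. \<Sum>s<4. G p x * ((\<alpha> r s * (\<Sum>y<4. G r y * P x y) + \<beta> r s * (\<Sum>y<4. G r y * Q x y)) * t s))"
    by (simp add: sum_distrib_left)
  also have "\<dots> = (\<Sum>r<4. \<Sum>s<4. \<Sum>x<4. G p x * ((\<alpha> r s * (\<Sum>y<4. G r y * P x y) + \<beta> r s * (\<Sum>y<4. G r y * Q x y)) * t s))"
    by (rule pull2[symmetric])
  also have "\<dots> = (\<Sum>r<4. \<Sum>s<4. (\<alpha> r s * (\<Sum>x<4. \<Sum>y<4. G p x * G r y * P x y) + \<beta> r s * (\<Sum>x<4. \<Sum>y<4. G p x * G r y * Q x y)) * t s)"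
    by (intro sum.cong refl) (simp add: sum_distrib_left sum_distrib_right sum.distrib algebra_simps)
  finally show ?thesis .
qed

lemma final_shape:
  fixes A B :: "nat \<Rightarrow> nat \<Rightarrow> real" and P Q :: "nat \<Rightarrow> nat \<Rightarrow> nat \<Rightarrow> real" and t :: "nat \<Rightarrow> real"
  shows "(\<Sum>p<4. \<Sum>q<4. (A p q * (\<Sum>r<4. \<Sum>s<4. P p r s * t s) + B p q * (\<Sum>r<4. \<Sum>s<4. Q p r s * t s)) * t q)
   = (\<Sum>p<4. \<Sum>q<4. \<Sum>r<4. \<Sum>s<4. (A p q * P p r s + B p q * Q p r s) * t q * t s)"
  by (simp add: sum_distrib_left sum_distrib_right sum.distrib algebra_simps)


lemma frakA_eq: "(\<Sum>s<4. (\<Sum>q<4. X x q y s * t q) * t s) = frakA g X t x y"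
proof -
  have "(\<Sum>s<4. (\<Sum>q<4. X x q y s * t q) * t s) = (\<Sum>s<4. \<Sum>q<4. X x q y s * t q * t s)"
    by (simp add: sum_distrib_right)
  also have "\<dots> = (\<Sum>q<4. \<Sum>s<4. X x q y s * t q * t s)" by (rule sum.swap)
  finally show ?thesis by (simp add: frakA_def contr_def)
qed

lemma frakB_eq: "- (\<Sum>d<4. (1/2 * (\<Sum>u<4. \<Sum>v<4. eps_mix g y d u v * (\<Sum>b<4. X x b u v * t b))) * t d)
   = frakB g X t x y"
proof -
  have l: "- (\<Sum>d<4. (1/2 * (\<Sum>u<4. \<Sum>v<4. eps_mix g y d u v * (\<Sum>b<4. X x b u v * t b))) * t d)
     = (\<Sum>d<4. \<Sum>u<4. \<Sum>v<4. \<Sum>b<4. - (1/2) * eps_mix g y d u v * X x b u v * t b * t d)"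
    by (simp add: sum_distrib_left sum_distrib_right sum_negf[symmetric] mult_ac)
  have r: "frakB g X t x y = (\<Sum>b<4. \<Sum>d<4. \<Sum>u<4. \<Sum>v<4. - (1/2) * eps_mix g y d u v * X x b u v * t b * t d)"
    unfolding frakB_def contr_def right_dual_def
    by (simp add: sum_distrib_left sum_distrib_right sum_negf[symmetric] mult_ac)
  have s: "(\<Sum>d<4. \<Sum>u<4. \<Sum>v<4. \<Sum>b<4. - (1/2) * eps_mix g y d u v * X x b u v * t b * t d)
     = (\<Sum>b<4. \<Sum>d<4. \<Sum>u<4. \<Sum>v<4. - (1/2) * eps_mix g y d u v * X x b u v * t b * t d)"
    by (rule pull3)
  show ?thesis unfolding l r s ..
qed

lemma frakC_eq: "(\<Sum>s<4. - (\<Sum>q<4. (1/2 * (\<Sum>u<4. \<Sum>v<4. eps_mix g x q u v * X u v y s)) * t q) * t s)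
   = frakC g X t x y"
proof -
  have "(\<Sum>s<4. - (\<Sum>q<4. (1/2 * (\<Sum>u<4. \<Sum>v<4. eps_mix g x q u v * X u v y s)) * t q) * t s)
     = (\<Sum>s<4. \<Sum>q<4. - ((1/2 * (\<Sum>u<4. \<Sum>v<4. eps_mix g x q u v * X u v y s)) * t q * t s))"
    by (simp add: sum_distrib_right sum_negf)
  also have "\<dots> = (\<Sum>q<4. \<Sum>s<4. - ((1/2 * (\<Sum>u<4. \<Sum>v<4. eps_mix g x q u v * X u v y s)) * t q * t s))"
    by (rule sum.swap)
  finally show ?thesis by (simp add: frakC_def contr_def left_dual_def sum_negf)
qed

lemma frakD_eq: "- (\<Sum>s<4. (1/2 * (\<Sum>u<4. \<Sum>v<4. eps_mix g y s u v *
      (- (\<Sum>q<4. (1/2 * (\<Sum>u'<4. \<Sum>v'<4. eps_mix g x q u' v' * X u' v' u v)) * t q)))) * t s)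
   = frakD g X t x y"
proof -
  let ?Z = "\<lambda>s u v q u' v'. 1/4 * eps_mix g x q u' v' * eps_mix g y s u v * X u' v' u v * t q * t s"
  have l: "- (\<Sum>s<4. (1/2 * (\<Sum>u<4. \<Sum>v<4. eps_mix g y s u v *
      (- (\<Sum>q<4. (1/2 * (\<Sum>u'<4. \<Sum>v'<4. eps_mix g x q u' v' * X u' v' u v)) * t q)))) * t s)
     = (\<Sum>s<4. \<Sum>u<4. \<Sum>v<4. \<Sum>q<4. \<Sum>u'<4. \<Sum>v'<4. ?Z s u v q u' v')"
    by (simp add: sum_distrib_left sum_distrib_right sum_negf mult_ac)
  have r: "frakD g X t x y = (\<Sum>q<4. \<Sum>s<4. \<Sum>u'<4. \<Sum>v'<4. \<Sum>u<4. \<Sum>v<4. ?Z s u v q u' v')"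
    unfolding frakD_def contr_def double_dual_def
    by (simp add: sum_distrib_left sum_distrib_right mult_ac)
  have s1: "(\<Sum>s<4. \<Sum>u<4. \<Sum>v<4. \<Sum>q<4. \<Sum>u'<4. \<Sum>v'<4. ?Z s u v q u' v')
     = (\<Sum>q<4. \<Sum>s<4. \<Sum>u<4. \<Sum>v<4. \<Sum>u'<4. \<Sum>v'<4. ?Z s u v q u' v')"
    by (rule pull3)
  have s2: "(\<Sum>u<4. \<Sum>v<4. \<Sum>u'<4. \<Sum>v'<4. ?Z s u v q u' v') = (\<Sum>u'<4. \<Sum>u<4. \<Sum>v<4. \<Sum>v'<4. ?Z s u v q u' v')" for s q
    by (rule pull2)
  have s3: "(\<Sum>u<4. \<Sum>v<4. \<Sum>v'<4. ?Z s u v q u' v') = (\<Sum>v'<4. \<Sum>u<4. \<Sum>v<4. ?Z s u v q u' v')" for s q u'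
    by (rule pull2)
  show ?thesis unfolding l r s1 s2 s3 ..
qed

theorem mainTheorem6:
  fixes g :: "nat \<Rightarrow> nat \<Rightarrow> real"
    and X :: "nat \<Rightarrow> nat \<Rightarrow> nat \<Rightarrow> nat \<Rightarrow> real"
    and t :: "nat \<Rightarrow> real"
  assumes "lorentzian g"
    and "\<And>a b c d. a < 4 \<Longrightarrow> b < 4 \<Longrightarrow> c < 4 \<Longrightarrow> d < 4 \<Longrightarrow> X a b c d = - X b a c d"
    and "\<And>a b c d. a < 4 \<Longrightarrow> b < 4 \<Longrightarrow> c < 4 \<Longrightarrow> d < 4 \<Longrightarrow> X a b c d = - X a b d c"
    and "sqnorm g t \<noteq> 0"
    and "a < 4" "b < 4" "c < 4" "d < 4"
  shows "X a b c d =
    (\<Sum>p<4. \<Sum>q<4. \<Sum>r<4. \<Sum>s<4.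
       (g4 g a b p q * (g4 g c d r s * raise2 g (frakA g X t) p r
                        + eps_low g c d r s * raise2 g (frakB g X t) p r)
        + eps_low g a b p q * (g4 g c d r s * raise2 g (frakC g X t) p r
                        + eps_low g c d r s * raise2 g (frakD g X t) p r))
       * t q * t s) / (sqnorm g t)^2"
proof -
  note lor = assms(1)
  note anti1 = assms(2) and anti2 = assms(3)
  let ?n = "sqnorm g t"
  let ?G = "GG g"
  let ?E1 = "\<lambda>x c d. \<Sum>q<4. X x q c d * t q"
  let ?H1 = "\<lambda>x c d. - (\<Sum>q<4. (1/2 * (\<Sum>u<4. \<Sum>v<4. eps_mix g x q u v * X u v c d)) * t q)"
  have L1: "(\<Sum>p<4. \<Sum>q<4. (g4 g a b p q * (\<Sum>x<4. ?G p x * ?E1 x c d)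
          + eps_low g a b p q * (\<Sum>x<4. ?G p x * ?H1 x c d)) * t q) = ?n * X a b c d"
  proof -
    have an: "X i j c d = - X j i c d" if "i < 4" "j < 4" for i j using anti1[OF that assms(7,8)] .
    show ?thesis using twoform[OF lor, where F="\<lambda>a b. X a b c d" and a=a and b=b and t=t, OF an assms(5,6)] by simp
  qed
  have L2: "(\<Sum>r<4. \<Sum>s<4. (g4 g c d r s * (\<Sum>y<4. ?G r y * frakA g X t x y)
          + eps_low g c d r s * (\<Sum>y<4. ?G r y * frakB g X t x y)) * t s) = ?n * ?E1 x c d" if x: "x < 4" for x
  proof -
    have an: "\<And>i j. i < 4 \<Longrightarrow> j < 4 \<Longrightarrow> (\<Sum>q<4. X x q i j * t q) = - (\<Sum>q<4. X x q j i * t q)"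
    proof -
      fix i j :: nat assume ij: "i < 4" "j < 4"
      show "(\<Sum>q<4. X x q i j * t q) = - (\<Sum>q<4. X x q j i * t q)"
        unfolding sum_negf[symmetric] by (rule sum.cong[OF refl]) (simp add: anti2[OF x _ ij(2) ij(1)])
    qed
    show ?thesis
      using twoform[OF lor, where F="\<lambda>c d. ?E1 x c d" and a=c and b=d and t=t, OF an assms(7,8)]
      by (simp only: frakA_eq[where g=g] frakB_eq)
  qed
  have L3: "(\<Sum>r<4. \<Sum>s<4. (g4 g c d r s * (\<Sum>y<4. ?G r y * frakC g X t x y)
          + eps_low g c d r s * (\<Sum>y<4. ?G r y * frakD g X t x y)) * t s) = ?n * ?H1 x c d" if x: "x < 4" for x
  proof -
    have an: "\<And>i j. i < 4 \<Longrightarrow> j < 4 \<Longrightarrow> ?H1 x i j = - ?H1 x j i"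
    proof -
      fix i j :: nat assume ij: "i < 4" "j < 4"
      have inner: "(\<Sum>u<4. \<Sum>v<4. eps_mix g x q u v * X u v i j) = - (\<Sum>u<4. \<Sum>v<4. eps_mix g x q u v * X u v j i)" for q
        unfolding sum_negf[symmetric] by (intro sum.cong refl) (simp add: anti2[OF _ _ ij(2) ij(1)])
      show "?H1 x i j = - ?H1 x j i" by (simp add: inner sum_negf)
    qed
    show ?thesis
      using twoform[OF lor, where F="\<lambda>c d. ?H1 x c d" and a=c and b=d and t=t, OF an assms(7,8)]
      by (simp only: frakC_eq[where g=g] frakD_eq)
  qed
  have "?n * ?n * X a b c d = ?n * (\<Sum>p<4. \<Sum>q<4. (g4 g a b p q * (\<Sum>x<4. ?G p x * ?E1 x c d)
          + eps_low g a b p q * (\<Sum>x<4. ?G p x * ?H1 x c d)) * t q)"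
    using L1 by simp
  also have "\<dots> = (\<Sum>p<4. \<Sum>q<4. (g4 g a b p q * (\<Sum>x<4. ?G p x * (?n * ?E1 x c d))
          + eps_low g a b p q * (\<Sum>x<4. ?G p x * (?n * ?H1 x c d))) * t q)"
    unfolding sum_distrib_left
    by (intro sum.cong refl) (simp add: sum_distrib_left algebra_simps)
  also have "\<dots> = (\<Sum>p<4. \<Sum>q<4. (g4 g a b p q * (\<Sum>x<4. ?G p x * (\<Sum>r<4. \<Sum>s<4. (g4 g c d r s * (\<Sum>y<4. ?G r y * frakA g X t x y)
          + eps_low g c d r s * (\<Sum>y<4. ?G r y * frakB g X t x y)) * t s))
          + eps_low g a b p q * (\<Sum>x<4. ?G p x * (\<Sum>r<4. \<Sum>s<4. (g4 g c d r s * (\<Sum>y<4. ?G r y * frakC g X t x y)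
          + eps_low g c d r s * (\<Sum>y<4. ?G r y * frakD g X t x y)) * t s))) * t q)"
  proof -
    have L2': "x \<in> {..<4} \<Longrightarrow> (\<Sum>r<4. \<Sum>s<4. (g4 g c d r s * (\<Sum>y<4. ?G r y * frakA g X t x y)
          + eps_low g c d r s * (\<Sum>y<4. ?G r y * frakB g X t x y)) * t s) = ?n * ?E1 x c d" for x
      using L2 by simp
    have L3': "x \<in> {..<4} \<Longrightarrow> (\<Sum>r<4. \<Sum>s<4. (g4 g c d r s * (\<Sum>y<4. ?G r y * frakC g X t x y)
          + eps_low g c d r s * (\<Sum>y<4. ?G r y * frakD g X t x y)) * t s) = ?n * ?H1 x c d" for x
      using L3 by simp
    have e1: "(\<Sum>x<4. ?G p x * (?n * ?E1 x c d)) = (\<Sum>x<4. ?G p x * (\<Sum>r<4. \<Sum>s<4. (g4 g c d r s * (\<Sum>y<4. ?G r y * frakA g X t x y)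
          + eps_low g c d r s * (\<Sum>y<4. ?G r y * frakB g X t x y)) * t s))" for p
    proof (rule sum.cong[OF refl])
      fix x :: nat assume "x \<in> {..<4}"
      then show "?G p x * (?n * ?E1 x c d) = ?G p x * (\<Sum>r<4. \<Sum>s<4. (g4 g c d r s * (\<Sum>y<4. ?G r y * frakA g X t x y)
          + eps_low g c d r s * (\<Sum>y<4. ?G r y * frakB g X t x y)) * t s)" using L2' by simp
    qed
    have e2: "(\<Sum>x<4. ?G p x * (?n * ?H1 x c d)) = (\<Sum>x<4. ?G p x * (\<Sum>r<4. \<Sum>s<4. (g4 g c d r s * (\<Sum>y<4. ?G r y * frakC g X t x y)
          + eps_low g c d r s * (\<Sum>y<4. ?G r y * frakD g X t x y)) * t s))" for p
    proof (rule sum.cong[OF refl])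
      fix x :: nat assume "x \<in> {..<4}"
      then show "?G p x * (?n * ?H1 x c d) = ?G p x * (\<Sum>r<4. \<Sum>s<4. (g4 g c d r s * (\<Sum>y<4. ?G r y * frakC g X t x y)
          + eps_low g c d r s * (\<Sum>y<4. ?G r y * frakD g X t x y)) * t s)" using L3' by simp
    qed
    show ?thesis unfolding e1 e2 ..
  qed
  also have "\<dots> = (\<Sum>p<4. \<Sum>q<4. (g4 g a b p q * (\<Sum>r<4. \<Sum>s<4. (g4 g c d r s * raise2 g (frakA g X t) p r
          + eps_low g c d r s * raise2 g (frakB g X t) p r) * t s)
          + eps_low g a b p q * (\<Sum>r<4. \<Sum>s<4. (g4 g c d r s * raise2 g (frakC g X t) p r
          + eps_low g c d r s * raise2 g (frakD g X t) p r) * t s)) * t q)"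
    by (simp only: comb raise2_def GG_def)
  also have "\<dots> = (\<Sum>p<4. \<Sum>q<4. \<Sum>r<4. \<Sum>s<4.
       (g4 g a b p q * (g4 g c d r s * raise2 g (frakA g X t) p r
                        + eps_low g c d r s * raise2 g (frakB g X t) p r)
        + eps_low g a b p q * (g4 g c d r s * raise2 g (frakC g X t) p r
                        + eps_low g c d r s * raise2 g (frakD g X t) p r))
       * t q * t s)"
    by (rule final_shape)
  finally show ?thesis using assms(4) by (simp add: power2_eq_square field_simps)
qed

end
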